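(* Let $A$ be a seminormal cancellative monoid. Then the conductor ideal $I$ of the inclusion $A\hookrightarrow A_{\mathrm{nor}}$ is a radical ideal of both $A$ and $A_{\mathrm{nor}}$.
   Context: A monoid is a pointed commutative monoid; cancellative means $ac=bc$ with $c\ne0$ implies $a=b$; seminormal means reduced ($a^2=b^2,a^3=b^3\Rightarrow a=b$) and whenever $x^3=y^2$ there is $z$ with $x=z^2,y=z^3$. For cancellative $A$, $A^+$ is the group completion of $A\setminus\{0\}$ with a basepoint adjoined, and $A_{\mathrm{nor}}=\{\alpha\in A^+:\alpha^n\in A\text{ for some }n\ge1\}$. The conductor ideal of $A\subset A_{\mathrm{nor}}$ is $I=\{a\in A: A_{\mathrm{nor}}\cdot a\subseteq A\}$ (an ideal of both $A$ and $A_{\mathrm{nor}}$). An ideal $I$ of a monoid $B$ is radical if $b^n\in I$ for some $n\ge1$ implies $b\in I$. *)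

theory Defs
  imports Main
begin

text \<open>A pointed commutative monoid is modelled as a type of sort
  comm_monoid_mult and mult_zero: the whole type is the monoid, 1 is the unit
  and 0 is the basepoint (absorbing element).\<close>

definition cancellative :: "'a::{comm_monoid_mult,mult_zero} itself \<Rightarrow> bool" where
  "cancellative _ \<longleftrightarrow> (\<forall>a b c::'a. a * c = b * c \<and> c \<noteq> 0 \<longrightarrow> a = b)"

definition reduced :: "'a::{comm_monoid_mult,mult_zero} itself \<Rightarrow> bool" where
  "reduced _ \<longleftrightarrow> (\<forall>a b::'a. a ^ 2 = b ^ 2 \<and> a ^ 3 = b ^ 3 \<longrightarrow> a = b)"

definition seminormal :: "'a::{comm_monoid_mult,mult_zero} itself \<Rightarrow> bool" where
  "seminormal T \<longleftrightarrow> reduced T \<and>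
     (\<forall>x y::'a. x ^ 3 = y ^ 2 \<longrightarrow> (\<exists>z. x = z ^ 2 \<and> y = z ^ 3))"

text \<open>Group completion of A minus 0: classes of formal fractions a/b with a, b nonzero,
  (a,b) ~ (c,d) iff a d = b c.  The basepoint of A^+ is None.\<close>

definition frac :: "'a::{comm_monoid_mult,mult_zero} \<Rightarrow> 'a \<Rightarrow> ('a \<times> 'a) set" where
  "frac a b = {(c, d). c \<noteq> 0 \<and> d \<noteq> 0 \<and> a * d = b * c}"

definition gp_plus :: "'a::{comm_monoid_mult,mult_zero} itself \<Rightarrow> ('a \<times> 'a) set option set" where
  "gp_plus _ = insert None (Some ` {frac a b | a b::'a. a \<noteq> 0 \<and> b \<noteq> 0})"

definition gp_mult :: "('a::{comm_monoid_mult,mult_zero} \<times> 'a) set option \<Rightarrow>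
    ('a \<times> 'a) set option \<Rightarrow> ('a \<times> 'a) set option" where
  "gp_mult X Y = (case (X, Y) of
      (Some P, Some Q) \<Rightarrow>
        (let p = (SOME p. p \<in> P); q = (SOME q. q \<in> Q)
         in Some (frac (fst p * fst q) (snd p * snd q)))
    | _ \<Rightarrow> None)"

definition gp_emb :: "'a::{comm_monoid_mult,mult_zero} \<Rightarrow> ('a \<times> 'a) set option" where
  "gp_emb a = (if a = 0 then None else Some (frac a 1))"

fun gp_pow :: "('a::{comm_monoid_mult,mult_zero} \<times> 'a) set option \<Rightarrow> nat \<Rightarrow> ('a \<times> 'a) set option" where
  "gp_pow X 0 = gp_emb 1"
| "gp_pow X (Suc n) = gp_mult X (gp_pow X n)"

definition gp_A :: "'a::{comm_monoid_mult,mult_zero} itself \<Rightarrow> ('a \<times> 'a) set option set" where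
  "gp_A _ = range (gp_emb :: 'a \<Rightarrow> _)"

definition A_nor :: "'a::{comm_monoid_mult,mult_zero} itself \<Rightarrow> ('a \<times> 'a) set option set" where
  "A_nor T = {\<alpha> \<in> gp_plus T. \<exists>n\<ge>1. gp_pow \<alpha> n \<in> gp_A T}"

definition conductor :: "'a::{comm_monoid_mult,mult_zero} itself \<Rightarrow> 'a set" where
  "conductor T = {a. \<forall>\<alpha>\<in>A_nor T. gp_mult \<alpha> (gp_emb a) \<in> gp_A T}"

definition is_ideal_A :: "'a::{comm_monoid_mult,mult_zero} set \<Rightarrow> bool" where
  "is_ideal_A I \<longleftrightarrow> 0 \<in> I \<and> (\<forall>a x. x \<in> I \<longrightarrow> a * x \<in> I)"

definition radical_A :: "'a::{comm_monoid_mult,mult_zero} set \<Rightarrow> bool" where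
  "radical_A I \<longleftrightarrow> (\<forall>b n. n \<ge> 1 \<and> b ^ n \<in> I \<longrightarrow> b \<in> I)"

definition is_ideal_in :: "'b set \<Rightarrow> ('b \<Rightarrow> 'b \<Rightarrow> 'b) \<Rightarrow> 'b \<Rightarrow> 'b set \<Rightarrow> bool" where
  "is_ideal_in B m z J \<longleftrightarrow> J \<subseteq> B \<and> z \<in> J \<and> (\<forall>b\<in>B. \<forall>x\<in>J. m b x \<in> J)"

definition radical_in :: "'b set \<Rightarrow> ('b \<Rightarrow> nat \<Rightarrow> 'b) \<Rightarrow> 'b set \<Rightarrow> bool" where
  "radical_in B p J \<longleftrightarrow> (\<forall>b\<in>B. \<forall>n\<ge>1. p b n \<in> J \<longrightarrow> b \<in> J)"

end

theory Submission
  imports Defs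
begin

definition nor :: "'a::{comm_monoid_mult,mult_zero} \<Rightarrow> 'a \<Rightarrow> bool" where
  "nor a b \<longleftrightarrow> (\<exists>m\<ge>1. \<exists>d. a ^ m = b ^ m * d)"

lemma gp_mult_None1[simp]: "gp_mult None Y = None"
  by (simp add: gp_mult_def)
lemma gp_mult_None2[simp]: "gp_mult X None = None"
  by (cases X) (simp_all add: gp_mult_def)

context
  fixes T :: "'a::{comm_monoid_mult,mult_zero} itself"
  assumes canc0: "cancellative T"
begin

lemma canc: "a * c = b * c \<Longrightarrow> c \<noteq> 0 \<Longrightarrow> a = (b::'a)"
  using canc0 unfolding cancellative_def by blast

lemma nz_mult: "a \<noteq> 0 \<Longrightarrow> b \<noteq> 0 \<Longrightarrow> a * b \<noteq> (0::'a)"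
  by (metis canc mult_zero_left)

lemma nz_pow: "(a::'a) \<noteq> 0 \<Longrightarrow> 1 \<noteq> (0::'a) \<Longrightarrow> a ^ n \<noteq> 0"
  by (induction n) (auto simp: nz_mult)

lemma frac_self: "a \<noteq> 0 \<Longrightarrow> b \<noteq> 0 \<Longrightarrow> (a, b) \<in> frac a (b::'a)"
  by (simp add: frac_def mult.commute)

lemma frac_eq: "a \<noteq> 0 \<Longrightarrow> b \<noteq> 0 \<Longrightarrow> c \<noteq> 0 \<Longrightarrow> d \<noteq> 0 \<Longrightarrow>
   frac a b = frac c (d::'a) \<longleftrightarrow> a * d = b * c"
proof
  assume "a \<noteq> 0" "b \<noteq> 0" "c \<noteq> 0" "d \<noteq> 0" "frac a b = frac c d"
  then have "(c, d) \<in> frac a b" using frac_self by simp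
  then show "a * d = b * c" by (simp add: frac_def)
next
  assume nz: "a \<noteq> 0" "b \<noteq> 0" "c \<noteq> 0" "d \<noteq> 0" and e: "a * d = b * c"
  have "a * y = b * x \<longleftrightarrow> c * y = d * x" for x y
  proof
    assume h: "a * y = b * x"
    have "(c * y) * a = c * (a * y)" by (simp add: ac_simps)
    also have "\<dots> = (b * c) * x" using h by (simp add: ac_simps)
    also have "\<dots> = (a * d) * x" using e by simp
    also have "\<dots> = (d * x) * a" by (simp add: ac_simps)
    finally show "c * y = d * x" using canc nz by blast
  next
    assume h: "c * y = d * x"
    have "(a * y) * c = a * (c * y)" by (simp add: ac_simps)
    also have "\<dots> = (a * d) * x" using h by (simp add: ac_simps)
    also have "\<dots> = (b * c) * x" using e by simp
    also have "\<dots> = (b * x) * c" by (simp add: ac_simps)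
    finally show "a * y = b * x" using canc nz by blast
  qed
  then show "frac a b = frac c d"
    unfolding frac_def by (auto simp: mult.commute)
qed

lemma gp_mult_frac:
  assumes "a \<noteq> 0" "b \<noteq> 0" "c \<noteq> 0" "d \<noteq> 0"
  shows "gp_mult (Some (frac a b)) (Some (frac c d)) = Some (frac (a * c) (b * (d::'a)))"
proof -
  define p where "p = (SOME p. p \<in> frac a b)"
  define q where "q = (SOME q. q \<in> frac c d)"
  have p: "p \<in> frac a b" unfolding p_def using frac_self assms by (meson someI)
  have q: "q \<in> frac c d" unfolding q_def using frac_self assms by (meson someI)
  obtain p1 p2 where pp: "p = (p1, p2)" "p1 \<noteq> 0" "p2 \<noteq> 0" "a * p2 = b * p1"
    using p by (cases p) (auto simp: frac_def)
  obtain q1 q2 where qq: "q = (q1, q2)" "q1 \<noteq> 0" "q2 \<noteq> 0" "c * q2 = d * q1"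
    using q by (cases q) (auto simp: frac_def)
  have "frac (p1 * q1) (p2 * q2) = frac (a * c) (b * d)"
    apply (subst frac_eq)
    using pp qq assms apply (auto simp: nz_mult)
    by (metis mult.assoc mult.commute)
  moreover have "gp_mult (Some (frac a b)) (Some (frac c d)) = Some (frac (fst p * fst q) (snd p * snd q))"
    by (simp add: gp_mult_def p_def q_def Let_def)
  ultimately show ?thesis using pp qq by simp
qed


context
  assumes one_nz: "(1::'a) \<noteq> 0"
begin

lemma emb_nz: "x \<noteq> 0 \<Longrightarrow> gp_emb (x::'a) = Some (frac x 1)"
  by (simp add: gp_emb_def)

lemma inA: assumes "a \<noteq> 0" "b \<noteq> (0::'a)"
  shows "Some (frac a b) \<in> gp_A T \<longleftrightarrow> (\<exists>c. a = b * c)"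
proof
  assume "Some (frac a b) \<in> gp_A T"
  then obtain c where c: "Some (frac a b) = gp_emb c" by (auto simp: gp_A_def)
  then have "c \<noteq> 0" by (auto simp: gp_emb_def)
  with c have "frac a b = frac c 1" by (simp add: gp_emb_def)
  then have "a * 1 = b * c" using frac_eq assms \<open>c \<noteq> 0\<close> one_nz by blast
  then show "\<exists>c. a = b * c" by auto
next
  assume "\<exists>c. a = b * c"
  then obtain c where c: "a = b * c" by auto
  then have "c \<noteq> 0" using assms by auto
  then have "frac a b = frac c 1" using frac_eq assms one_nz c by simp
  then have "Some (frac a b) = gp_emb c" using \<open>c \<noteq> 0\<close> by (simp add: gp_emb_def)
  then show "Some (frac a b) \<in> gp_A T" by (simp add: gp_A_def)
qed

lemma pow_frac: assumes "a \<noteq> 0" "b \<noteq> (0::'a)"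
  shows "gp_pow (Some (frac a b)) n = Some (frac (a ^ n) (b ^ n))"
proof (induction n)
  case 0
  then show ?case using one_nz by (simp add: gp_emb_def)
next
  case (Suc n)
  then show ?case using gp_mult_frac[of a b "a^n" "b^n"] assms nz_pow one_nz by simp
qed

lemma pow_None: "n \<ge> 1 \<Longrightarrow> gp_pow None n = None"
  by (cases n) auto

lemma gp_plus_cases: "\<alpha> \<in> gp_plus T \<Longrightarrow>
   \<alpha> = None \<or> (\<exists>a b::'a. a \<noteq> 0 \<and> b \<noteq> 0 \<and> \<alpha> = Some (frac a b))"
  by (auto simp: gp_plus_def)

lemma frac_gp_plus: "a \<noteq> 0 \<Longrightarrow> b \<noteq> 0 \<Longrightarrow> Some (frac a (b::'a)) \<in> gp_plus T"
  by (auto simp: gp_plus_def)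

lemma None_Anor: "None \<in> A_nor T"
proof -
  have "gp_pow (None::('a\<times>'a) set option) 1 = gp_emb 0" by (simp add: gp_emb_def)
  then show ?thesis by (auto simp: A_nor_def gp_plus_def gp_A_def intro!: exI[of _ 1])
qed

lemma Anor_frac: assumes "a \<noteq> 0" "b \<noteq> (0::'a)"
  shows "Some (frac a b) \<in> A_nor T \<longleftrightarrow> nor a b"
  using assms by (simp add: A_nor_def frac_gp_plus pow_frac inA nz_pow one_nz nor_def)

lemma cond_char: "x \<in> conductor T \<longleftrightarrow>
   x = 0 \<or> (\<forall>a b::'a. a \<noteq> 0 \<longrightarrow> b \<noteq> 0 \<longrightarrow> nor a b \<longrightarrow> (\<exists>c. a * x = b * c))"
proof (cases "x = 0")
  case True
  then show ?thesis by (auto simp: conductor_def gp_emb_def gp_A_def intro: range_eqI[of _ _ 0])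
next
  case False
  have "(\<forall>\<alpha>\<in>A_nor T. gp_mult \<alpha> (gp_emb x) \<in> gp_A T) \<longleftrightarrow>
     (\<forall>a b::'a. a \<noteq> 0 \<longrightarrow> b \<noteq> 0 \<longrightarrow> nor a b \<longrightarrow> (\<exists>c. a * x = b * c))"
  proof
    assume h: "\<forall>\<alpha>\<in>A_nor T. gp_mult \<alpha> (gp_emb x) \<in> gp_A T"
    show "\<forall>a b::'a. a \<noteq> 0 \<longrightarrow> b \<noteq> 0 \<longrightarrow> nor a b \<longrightarrow> (\<exists>c. a * x = b * c)"
    proof (intro allI impI)
      fix a b :: 'a assume "a \<noteq> 0" "b \<noteq> 0" "nor a b"
      then have "gp_mult (Some (frac a b)) (gp_emb x) \<in> gp_A T" using h Anor_frac by blast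
      then show "\<exists>c. a * x = b * c"
        using False \<open>a \<noteq> 0\<close> \<open>b \<noteq> 0\<close> one_nz
        by (simp add: emb_nz gp_mult_frac inA nz_mult)
    qed
  next
    assume h: "\<forall>a b::'a. a \<noteq> 0 \<longrightarrow> b \<noteq> 0 \<longrightarrow> nor a b \<longrightarrow> (\<exists>c. a * x = b * c)"
    show "\<forall>\<alpha>\<in>A_nor T. gp_mult \<alpha> (gp_emb x) \<in> gp_A T"
    proof
      fix \<alpha> assume a: "\<alpha> \<in> A_nor T"
      then have "\<alpha> \<in> gp_plus T" by (simp add: A_nor_def)
      from gp_plus_cases[OF this] show "gp_mult \<alpha> (gp_emb x) \<in> gp_A T"
      proof
        assume "\<alpha> = None"
        then show ?thesis by (auto simp: gp_A_def gp_emb_def intro: range_eqI[of _ _ 0])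
      next
        assume "\<exists>a b::'a. a \<noteq> 0 \<and> b \<noteq> 0 \<and> \<alpha> = Some (frac a b)"
        then obtain a b :: 'a where ab: "a \<noteq> 0" "b \<noteq> 0" "\<alpha> = Some (frac a b)" by blast
        then have "nor a b" using a Anor_frac by blast
        then show ?thesis using h ab False one_nz
          by (simp add: emb_nz gp_mult_frac inA nz_mult)
      qed
    qed
  qed
  then show ?thesis using False by (simp add: conductor_def)
qed


lemma nor_pow: "nor a b \<Longrightarrow> nor (a ^ j) ((b::'a) ^ j)"
proof -
  assume "nor a b"
  then obtain m d where "m \<ge> 1" "a ^ m = b ^ m * d" by (auto simp: nor_def)
  then have "(a ^ j) ^ m = (b ^ j) ^ m * d ^ j"
    by (metis power_mult power_mult_distrib mult.commute)
  then show ?thesis using \<open>m \<ge> 1\<close> by (auto simp: nor_def)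
qed

lemma nor_mult: "nor a b \<Longrightarrow> nor a' b' \<Longrightarrow> nor (a * a') ((b::'a) * b')"
proof -
  assume "nor a b" "nor a' b'"
  then obtain m d m' d' where "m \<ge> 1" "a ^ m = b ^ m * d" "m' \<ge> 1" "a' ^ m' = b' ^ m' * d'"
    by (auto simp: nor_def)
  then have "(a * a') ^ (m * m') = (b * b') ^ (m * m') * (d ^ m' * d' ^ m)"
    by (metis (no_types, lifting) mult.assoc mult.commute power_mult power_mult_distrib)
  moreover have "m * m' \<ge> 1" using \<open>m \<ge> 1\<close> \<open>m' \<ge> 1\<close> by simp
  ultimately show ?thesis unfolding nor_def by blast
qed

lemma nor_1: "nor y (1::'a)"
  by (auto simp: nor_def intro!: exI[of _ 1])

lemma ideal_A: "x \<in> conductor T \<Longrightarrow> y * x \<in> conductor T"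
proof -
  assume x: "x \<in> conductor T"
  show ?thesis unfolding cond_char
  proof (cases "y * x = 0")
    case False
    then have "x \<noteq> 0" by auto
    show "y * x = 0 \<or> (\<forall>a b::'a. a \<noteq> 0 \<longrightarrow> b \<noteq> 0 \<longrightarrow> nor a b \<longrightarrow> (\<exists>c. a * (y * x) = b * c))"
    proof (intro disjI2 allI impI)
      fix a b :: 'a assume "a \<noteq> 0" "b \<noteq> 0" "nor a b"
      then obtain c where "a * x = b * c" using x \<open>x \<noteq> 0\<close> cond_char by blast
      then have "a * (y * x) = b * (y * c)" by (metis mult.assoc mult.commute)
      then show "\<exists>c. a * (y * x) = b * c" by blast
    qed
  qed simp
qed

context
  assumes semi: "seminormal T"
begin

lemma semi_core:
  assumes "a \<noteq> 0" "b \<noteq> (0::'a)" "a ^ 2 = b ^ 2 * x" "a ^ 3 = b ^ 3 * y"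
  shows "\<exists>c. a = b * c"
proof -
  have "x ^ 3 * b ^ 6 = y ^ 2 * b ^ 6"
  proof -
    have "x ^ 3 * b ^ 6 = (b ^ 2 * x) ^ 3" by (simp add: power_mult_distrib ac_simps flip: power_mult)
    also have "\<dots> = (a ^ 2) ^ 3" using assms(3) by simp
    also have "\<dots> = (a ^ 3) ^ 2" by (simp flip: power_mult)
    also have "\<dots> = (b ^ 3 * y) ^ 2" using assms(4) by simp
    also have "\<dots> = y ^ 2 * b ^ 6" by (simp add: power_mult_distrib ac_simps flip: power_mult)
    finally show ?thesis .
  qed
  then have "x ^ 3 = y ^ 2" using canc nz_pow assms one_nz by blast
  then obtain z where z: "x = z ^ 2" "y = z ^ 3" using semi unfolding seminormal_def by blast
  have "a ^ 2 = (b * z) ^ 2" "a ^ 3 = (b * z) ^ 3"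
    using assms z by (simp_all add: power_mult_distrib)
  then have "a = b * z" using semi unfolding seminormal_def reduced_def by blast
  then show ?thesis by blast
qed

lemma semi_S:
  "N \<ge> 1 \<Longrightarrow> a \<noteq> 0 \<Longrightarrow> b \<noteq> (0::'a) \<Longrightarrow> (\<forall>k\<ge>N. \<exists>c. a ^ k = b ^ k * c) \<Longrightarrow> \<exists>c. a = b * c"
proof (induction N arbitrary: a b rule: nat_induct_at_least)
  case base
  then show ?case by (metis power_one_right order_refl)
next
  case (Suc N)
  have "\<exists>c. a ^ N = b ^ N * c"
  proof -
    obtain x where "a ^ (N * 2) = b ^ (N * 2) * x" using Suc.prems(3) Suc.hyps by fastforce
    moreover obtain y where "a ^ (N * 3) = b ^ (N * 3) * y" using Suc.prems(3) Suc.hyps by fastforce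
    ultimately show ?thesis using semi_core[of "a ^ N" "b ^ N" x y] Suc.prems nz_pow one_nz
      by (simp add: power_mult)
  qed
  then obtain c0 where c0: "a ^ N = b ^ N * c0" by blast
  have "\<forall>k\<ge>N. \<exists>c. a ^ k = b ^ k * c"
  proof (intro allI impI)
    fix k assume "k \<ge> N"
    show "\<exists>c. a ^ k = b ^ k * c"
    proof (cases "k = N")
      case True then show ?thesis using c0 by blast
    next
      case False then show ?thesis using Suc.prems(3) \<open>k \<ge> N\<close> by simp
    qed
  qed
  then show ?case using Suc.IH Suc.prems by blast
qed


lemma rad_A: "n \<ge> 1 \<Longrightarrow> y ^ n \<in> conductor T \<Longrightarrow> (y::'a) \<in> conductor T"
proof -
  assume n: "n \<ge> 1" and yn: "y ^ n \<in> conductor T"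
  show ?thesis
  proof (cases "y = 0")
    case True then show ?thesis by (simp add: cond_char)
  next
    case False
    then have ynz: "y ^ n \<noteq> 0" using nz_pow one_nz by blast
    show ?thesis unfolding cond_char
    proof (intro disjI2 allI impI)
      fix a b :: 'a assume ab: "a \<noteq> 0" "b \<noteq> 0" "nor a b"
      have "\<forall>k\<ge>n. \<exists>c. (a * y) ^ k = b ^ k * c"
      proof (intro allI impI)
        fix k assume k: "k \<ge> n"
        have "nor (a ^ k * y ^ (k - n)) (b ^ k * 1 ^ (k - n))"
          using nor_mult[OF nor_pow[OF ab(3)] nor_pow[OF nor_1]] .
        then have nr: "nor (a ^ k * y ^ (k - n)) (b ^ k)" by simp
        have "a ^ k * y ^ (k - n) \<noteq> 0" "b ^ k \<noteq> 0"
          using ab False nz_pow nz_mult one_nz by auto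
        then obtain c where c: "a ^ k * y ^ (k - n) * y ^ n = b ^ k * c"
          using yn ynz nr cond_char by blast
        have "(a * y) ^ k = a ^ k * y ^ (k - n) * y ^ n"
          using k by (simp add: power_mult_distrib mult.assoc flip: power_add)
        then show "\<exists>c. (a * y) ^ k = b ^ k * c" using c by auto
      qed
      then show "\<exists>c. a * y = b * c"
        using semi_S[OF n] ab False nz_mult by blast
    qed
  qed
qed

lemma rad_in:
  assumes al: "\<alpha> \<in> A_nor T" and n: "n \<ge> 1" and x: "gp_pow \<alpha> n = gp_emb x" "x \<in> conductor T"
  shows "\<alpha> \<in> gp_emb ` conductor T"
proof -
  have "\<alpha> \<in> gp_plus T" using al by (simp add: A_nor_def)
  from gp_plus_cases[OF this] show ?thesis
  proof
    assume "\<alpha> = None"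
    moreover have "(0::'a) \<in> conductor T" by (simp add: cond_char)
    ultimately show ?thesis by (auto simp: gp_emb_def intro: image_eqI[of _ _ 0])
  next
    assume "\<exists>a b::'a. a \<noteq> 0 \<and> b \<noteq> 0 \<and> \<alpha> = Some (frac a b)"
    then obtain a b :: 'a where ab: "a \<noteq> 0" "b \<noteq> 0" "\<alpha> = Some (frac a b)" by blast
    then have nab: "nor a b" using al Anor_frac by blast
    have pw: "gp_pow \<alpha> n = Some (frac (a ^ n) (b ^ n))" using ab pow_frac by simp
    then have xnz: "x \<noteq> 0" using x by (auto simp: gp_emb_def)
    have "frac (a ^ n) (b ^ n) = frac x 1" using pw x xnz by (simp add: gp_emb_def)
    then have anx: "a ^ n = b ^ n * x"
      using frac_eq ab nz_pow one_nz xnz by (metis mult_1_right)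
    have "\<forall>k\<ge>n. \<exists>c. a ^ k = b ^ k * c"
    proof (intro allI impI)
      fix k assume k: "k \<ge> n"
      have "nor (a ^ (k - n)) (b ^ (k - n))" using nor_pow nab by blast
      moreover have "a ^ (k - n) \<noteq> 0" "b ^ (k - n) \<noteq> 0" using ab nz_pow one_nz by auto
      ultimately obtain c where c: "a ^ (k - n) * x = b ^ (k - n) * c"
        using x(2) xnz cond_char by blast
      have "a ^ k = a ^ (k - n) * a ^ n" using k by (simp flip: power_add)
      also have "\<dots> = b ^ n * (a ^ (k - n) * x)" using anx by (simp add: ac_simps)
      also have "\<dots> = (b ^ n * b ^ (k - n)) * c" using c by (simp add: mult.assoc)
      also have "\<dots> = b ^ k * c" using k by (simp flip: power_add)
      finally show "\<exists>c. a ^ k = b ^ k * c" by blast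
    qed
    then obtain z where z: "a = b * z" using semi_S[OF n] ab by blast
    then have znz: "z \<noteq> 0" using ab by auto
    have "frac a b = frac z 1" using frac_eq ab znz one_nz z by simp
    then have al2: "\<alpha> = gp_emb z" using ab znz by (simp add: gp_emb_def)
    have "z ^ n * b ^ n = x * b ^ n" using anx z by (simp add: power_mult_distrib ac_simps)
    then have "z ^ n = x" using canc ab nz_pow one_nz by blast
    then have "z \<in> conductor T" using rad_A n x(2) by blast
    then show ?thesis using al2 by blast
  qed
qed

lemma ideal_in:
  assumes be: "\<beta> \<in> A_nor T" and x: "x \<in> conductor T"
  shows "gp_mult \<beta> (gp_emb x) \<in> gp_emb ` conductor T"
proof -
  have z: "(0::'a) \<in> conductor T" by (simp add: cond_char)
  have "\<beta> \<in> gp_plus T" using be by (simp add: A_nor_def)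
  from gp_plus_cases[OF this] show ?thesis
  proof
    assume "\<beta> = None"
    then show ?thesis using z by (auto simp: gp_emb_def intro: image_eqI[of _ _ 0])
  next
    assume "\<exists>a b::'a. a \<noteq> 0 \<and> b \<noteq> 0 \<and> \<beta> = Some (frac a b)"
    then obtain a b :: 'a where ab: "a \<noteq> 0" "b \<noteq> 0" "\<beta> = Some (frac a b)" by blast
    then have nab: "nor a b" using be Anor_frac by blast
    show ?thesis
    proof (cases "x = 0")
      case True
      then show ?thesis using z by (auto simp: gp_emb_def intro: image_eqI[of _ _ 0])
    next
      case False
      obtain c where c: "a * x = b * c" using x False ab nab cond_char by blast
      then have cnz: "c \<noteq> 0" using ab False nz_mult by auto
      have "gp_mult \<beta> (gp_emb x) = Some (frac (a * x) (b * 1))"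
        using ab False one_nz by (simp add: emb_nz gp_mult_frac)
      also have "frac (a * x) (b * 1) = frac c 1"
        using frac_eq ab False cnz one_nz nz_mult c by simp
      finally have eq: "gp_mult \<beta> (gp_emb x) = gp_emb c" using cnz by (simp add: emb_nz)
      have "c \<in> conductor T" unfolding cond_char
      proof (intro disjI2 allI impI)
        fix a' b' :: 'a assume ab': "a' \<noteq> 0" "b' \<noteq> 0" "nor a' b'"
        have "nor (a * a') (b * b')" using nor_mult nab ab'(3) by blast
        moreover have "a * a' \<noteq> 0" "b * b' \<noteq> 0" using ab ab' nz_mult by auto
        ultimately obtain e where e: "a * a' * x = b * b' * e" using x False cond_char by blast
        have "(a' * c) * b = (b' * e) * b"
        proof -
          have "(a' * c) * b = a' * (a * x)" using c by (simp add: ac_simps)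
          also have "\<dots> = b * b' * e" using e by (simp add: ac_simps)
          finally show ?thesis by (simp add: ac_simps)
        qed
        then have "a' * c = b' * e" using canc ab by blast
        then show "\<exists>e. a' * c = b' * e" by blast
      qed
      then show ?thesis using eq by blast
    qed
  qed
qed

lemma main_nz:
  "is_ideal_A (conductor T) \<and> radical_A (conductor T)
     \<and> is_ideal_in (A_nor T) gp_mult None (gp_emb ` conductor T)
     \<and> radical_in (A_nor T) gp_pow (gp_emb ` conductor T)"
proof (intro conjI)
  have z: "(0::'a) \<in> conductor T" by (simp add: cond_char)
  show "is_ideal_A (conductor T)" unfolding is_ideal_A_def using z ideal_A by blast
  show "radical_A (conductor T)" unfolding radical_A_def using rad_A by blast
  have sub: "gp_emb ` conductor T \<subseteq> A_nor T"
  proof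
    fix u assume "u \<in> gp_emb ` conductor T"
    then obtain x where u: "u = gp_emb x" by blast
    show "u \<in> A_nor T"
    proof (cases "x = 0")
      case True then show ?thesis using u None_Anor by (simp add: gp_emb_def)
    next
      case False then show ?thesis using u Anor_frac nor_1 one_nz by (simp add: emb_nz)
    qed
  qed
  have "None = gp_emb (0::'a)" by (simp add: gp_emb_def)
  then have "None \<in> gp_emb ` conductor T" using z by blast
  then show "is_ideal_in (A_nor T) gp_mult None (gp_emb ` conductor T)"
    unfolding is_ideal_in_def using sub ideal_in by blast
  show "radical_in (A_nor T) gp_pow (gp_emb ` conductor T)"
    unfolding radical_in_def using rad_in by blast
qed

end

end
end

lemma main_triv:
  fixes T :: "'a::{comm_monoid_mult,mult_zero} itself"
  assumes one: "(1::'a) = 0"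
  shows "is_ideal_A (conductor T) \<and> radical_A (conductor T)
     \<and> is_ideal_in (A_nor T) gp_mult None (gp_emb ` conductor T)
     \<and> radical_in (A_nor T) gp_pow (gp_emb ` conductor T)"
proof -
  have all0: "(x::'a) = 0" for x by (metis one mult_1_right mult_zero_right)
  have emb: "gp_emb (x::'a) = None" for x unfolding gp_emb_def using all0[of x] by simp
  have inA: "None \<in> gp_A T" unfolding gp_A_def using emb[of 0] by (metis rangeI)
  have cond: "conductor T = UNIV" unfolding conductor_def emb using inA by simp
  have gpp: "gp_plus T = {None}" unfolding gp_plus_def using all0 by blast
  have An: "A_nor T = {None}"
  proof
    show "A_nor T \<subseteq> {None}" unfolding A_nor_def gpp by blast
    have "gp_pow (None::('a\<times>'a) set option) 1 = None" by simp
    then show "{None} \<subseteq> A_nor T" unfolding A_nor_def gpp using inA by fastforce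
  qed
  have img: "gp_emb ` conductor T = {None}" unfolding cond using emb by (simp add: image_def)
  show ?thesis unfolding img An cond
    using img[unfolded cond] by (simp add: is_ideal_A_def radical_A_def is_ideal_in_def radical_in_def)
qed

theorem lemma1p19:
  fixes T :: "'a::{comm_monoid_mult,mult_zero} itself"
  assumes "cancellative T" and "seminormal T"
  shows "is_ideal_A (conductor T) \<and> radical_A (conductor T)
     \<and> is_ideal_in (A_nor T) gp_mult None (gp_emb ` conductor T)
     \<and> radical_in (A_nor T) gp_pow (gp_emb ` conductor T)"
proof (cases "(1::'a) = 0")
  case True
  then show ?thesis by (rule main_triv)
next
  case False
  then show ?thesis using main_nz[OF assms(1) False assms(2)] by blast
qed

end
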